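(* Let $\eta:\mathrm{STVB}_2\to M_3(\mathbb{C})$ be a complex homogeneous local representation of $\mathrm{STVB}_2$. Then $\eta$ is equivalent to one of the following thirteen representations $\eta_i$, described by $2\times2$ matrices $S,R,T,G$ with $\eta_i(\sigma_1)=S\oplus 1$, $\eta_i(\sigma_1^{-1})=S^{-1}\oplus 1$, $\eta_i(\rho_1)=R\oplus 1$, $\eta_i(\tau_1)=T\oplus 1$, $\eta_i(\gamma_1)=G\oplus 1$, $\eta_i(\gamma_2)=1\oplus G$ (all parameters complex): \begin{itemize} \item[(1)] $S=\begin{pmatrix}a&b\\ \frac{b}{x^2}&a\end{pmatrix}$, $R=\begin{pmatrix}0&x\\ \frac1x&0\end{pmatrix}$, $T=\begin{pmatrix}f&g\\ \frac{g}{x^2}&f\end{pmatrix}$, $G=\mathrm{diag}(-1,1)$; $a^2x^2-b^2\neq0$, $x\neq0$. \item[(2)] $S=\begin{pmatrix}a&b\\ \frac{b-bz^2}{x^2}&\frac{ax+2bz}{x}\end{pmatrix}$, $R=\begin{pmatrix}-z&x\\ \frac{1-z^2}{x}&z\end{pmatrix}$, $T=\begin{pmatrix}f&g\\ \frac{g-gz^2}{x^2}&\frac{fx+2gz}{x}\end{pmatrix}$, $G=I_2$; $a^2x^2+2abxz-b^2+b^2z^2\neq0$, $x\neq0$. \item[(3)] $S=\begin{pmatrix}a&b\\ c&d\end{pmatrix}$, $R=-I_2$, $T=\begin{pmatrix}f&g\\ \frac{cg}{b}&\frac{bf-ag+dg}{b}\end{pmatrix}$, $G=I_2$; $ad-bc\neq0$,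 $b\neq0$. \item[(4)] $S=\begin{pmatrix}a&b\\ c&d\end{pmatrix}$, $R=I_2$, $T=\begin{pmatrix}f&g\\ \frac{cg}{b}&\frac{bf-ag+dg}{b}\end{pmatrix}$, $G=I_2$; $ad-bc\neq0$, $b\neq0$. \item[(5)] $S=aI_2$, $R=-I_2$, $T=\begin{pmatrix}f&g\\ h&k\end{pmatrix}$, $G=I_2$; $a\neq0$. \item[(6)] $S=\begin{pmatrix}a&0\\ c&d\end{pmatrix}$, $R=-I_2$, $T=\begin{pmatrix}f&0\\ h&\frac{cf-ah+dh}{c}\end{pmatrix}$, $G=I_2$; $ad\neq0$, $c\neq0$. \item[(7)] $S=\begin{pmatrix}a&0\\ c&\frac{-2c+ay}{y}\end{pmatrix}$, $R=\begin{pmatrix}1&0\\ y&-1\end{pmatrix}$, $T=\begin{pmatrix}f&0\\ h&\frac{-2h+fy}{y}\end{pmatrix}$, $G=I_2$; $a(-2c+ay)\neq0$, $y\neq0$. \item[(8)] $S=\begin{pmatrix}a&0\\ c&\frac{2c+ay}{y}\end{pmatrix}$, $R=\begin{pmatrix}-1&0\\ y&1\end{pmatrix}$, $T=\begin{pmatrix}f&0\\ h&\frac{2h+fy}{y}\end{pmatrix}$, $G=I_2$; $a(2c+ay)\neq0$, $y\neq0$. \item[(9)] $S=aI_2$, $R=I_2$, $T=\begin{pmatrix}f&g\\ h&k\end{pmatrix}$, $G=I_2$; $a\neq0$. \item[(10)] $S=\begin{pmatrix}a&0\\ c&d\end{pmatrix}$, $R=I_2$, $T=\begin{pmatrix}f&0\\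 h&\frac{cf-ah+dh}{c}\end{pmatrix}$, $G=I_2$; $ad\neq0$, $c\neq0$. \item[(11)] $S=\mathrm{diag}(a,d)$, $R=\mathrm{diag}(1,-1)$, $T=\mathrm{diag}(f,k)$, $G=I_2$; $ad\neq0$. \item[(12)] $S=\mathrm{diag}(a,d)$, $R=\mathrm{diag}(-1,1)$, $T=\mathrm{diag}(f,k)$, $G=I_2$; $ad\neq0$. \item[(13)] $S=\mathrm{diag}(a,d)$, $R=I_2$, $T=\mathrm{diag}(f,k)$, $G=I_2$; $ad\neq0$. \end{itemize} In addition, if $\eta(\tau_1)$ is invertible, then $\eta$ becomes a representation of $\mathrm{STVG}_2$ (sending $\bar\tau_1$ to $\eta(\tau_1)^{-1}$).
   Context: The singular twisted virtual braid monoid $\mathrm{STVB}_2$ is the monoid generated by $\sigma_1,\sigma_1^{-1},\rho_1,\tau_1,\gamma_1,\gamma_2$ with defining relations $\sigma_1\sigma_1^{-1}=\sigma_1^{-1}\sigma_1=1$, $\rho_1^2=1$, $\gamma_1^2=\gamma_2^2=1$, $\gamma_1\gamma_2=\gamma_2\gamma_1$, $\rho_1\gamma_1=\gamma_2\rho_1$, $\rho_1\sigma_1\rho_1=\gamma_2\gamma_1\sigma_1\gamma_1\gamma_2$, $\sigma_1\tau_1=\tau_1\sigma_1$, $\rho_1\tau_1\rho_1=\gamma_2\gamma_1\tau_1\gamma_1\gamma_2$. The singular twisted virtual braid group $\mathrm{STVG}_2$ is the group with generators $\sigma_1,\rho_1,\tau_1,\bar\tau_1,\gamma_1,\gamma_2$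 satisfying all relations of $\mathrm{STVB}_2$, the same relations with $\bar\tau_1$ in place of $\tau_1$, and $\tau_1\bar\tau_1=\bar\tau_1\tau_1=1$. For a $2\times2$ matrix $M$, $M\oplus1=\begin{pmatrix}M&0\\0&1\end{pmatrix}$ and $1\oplus M=\begin{pmatrix}1&0\\0&M\end{pmatrix}$. A complex local representation $\eta:\mathrm{STVB}_2\to M_3(\mathbb{C})$ is a monoid homomorphism with $\eta(\sigma_1)=S\oplus1$, $\eta(\rho_1)=R\oplus1$, $\eta(\tau_1)=T\oplus1$, $\eta(\gamma_1)=G_1\oplus1$, $\eta(\gamma_2)=1\oplus G_2$, where $S,R,G_1,G_2\in\mathrm{GL}_2(\mathbb{C})$ and $T\in M_2(\mathbb{C})$; it is homogeneous if $G_1=G_2$. Two representations are equivalent if they are conjugate by a fixed invertible matrix. *)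

theory Defs
  imports "Jordan_Normal_Form.Matrix"
begin

definition m2 :: "complex \<Rightarrow> complex \<Rightarrow> complex \<Rightarrow> complex \<Rightarrow> complex mat" where
  "m2 a b c d = mat 2 2 (\<lambda>(i,j). if i = 0 then (if j = 0 then a else b) else (if j = 0 then c else d))"

definition I2 :: "complex mat" where "I2 = m2 1 0 0 1"

definition inv2 :: "complex mat \<Rightarrow> complex mat" where
  "inv2 M = (let a = M $$ (0,0); b = M $$ (0,1); c = M $$ (1,0); d = M $$ (1,1); D = a*d - b*c
             in m2 (d / D) (- b / D) (- c / D) (a / D))"

definition oplus1 :: "complex mat \<Rightarrow> complex mat" where
  "oplus1 M = mat 3 3 (\<lambda>(i,j). if i < 2 \<and> j < 2 then M $$ (i,j) else if i = 2 \<and> j = 2 then 1 else 0)"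

definition one_oplus :: "complex mat \<Rightarrow> complex mat" where
  "one_oplus M = mat 3 3 (\<lambda>(i,j). if 1 \<le> i \<and> 1 \<le> j then M $$ (i-1,j-1) else if i = 0 \<and> j = 0 then 1 else 0)"

definition GL2 :: "complex mat \<Rightarrow> bool" where
  "GL2 M \<longleftrightarrow> M \<in> carrier_mat 2 2 \<and> (\<exists>N \<in> carrier_mat 2 2. M * N = 1\<^sub>m 2 \<and> N * M = 1\<^sub>m 2)"

datatype bgen = Sig | SigInv | Rho | Tau | Gam1 | Gam2

definition ev :: "('g \<Rightarrow> complex mat) \<Rightarrow> 'g list \<Rightarrow> complex mat" where
  "ev eta w = foldr (\<lambda>x acc. eta x * acc) w (1\<^sub>m 3)"

definition STVB2_rels :: "(bgen list \<times> bgen list) list" where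
  "STVB2_rels =
    [([Sig, SigInv], []), ([SigInv, Sig], []),
     ([Rho, Rho], []), ([Gam1, Gam1], []), ([Gam2, Gam2], []),
     ([Gam1, Gam2], [Gam2, Gam1]),
     ([Rho, Gam1], [Gam2, Rho]),
     ([Rho, Sig, Rho], [Gam2, Gam1, Sig, Gam1, Gam2]),
     ([Sig, Tau], [Tau, Sig]),
     ([Rho, Tau, Rho], [Gam2, Gam1, Tau, Gam1, Gam2])]"

text \<open>A monoid homomorphism STVB_2 \<rightarrow> M_3(C), given by the images of the generators
  (by the universal property of the presentation).\<close>
definition STVB2_rep :: "(bgen \<Rightarrow> complex mat) \<Rightarrow> bool" where
  "STVB2_rep eta \<longleftrightarrow> (\<forall>x. eta x \<in> carrier_mat 3 3) \<and> (\<forall>(u,v) \<in> set STVB2_rels. ev eta u = ev eta v)"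

datatype ggen = GSig | GRho | GTau | GTauBar | GGam1 | GGam2

definition STVG2_rels :: "(ggen list \<times> ggen list) list" where
  "STVG2_rels =
    [([GRho, GRho], []), ([GGam1, GGam1], []), ([GGam2, GGam2], []),
     ([GGam1, GGam2], [GGam2, GGam1]),
     ([GRho, GGam1], [GGam2, GRho]),
     ([GRho, GSig, GRho], [GGam2, GGam1, GSig, GGam1, GGam2]),
     ([GSig, GTau], [GTau, GSig]),
     ([GRho, GTau, GRho], [GGam2, GGam1, GTau, GGam1, GGam2]),
     ([GSig, GTauBar], [GTauBar, GSig]),
     ([GRho, GTauBar, GRho], [GGam2, GGam1, GTauBar, GGam1, GGam2]),
     ([GTau, GTauBar], []), ([GTauBar, GTau], [])]"

definition STVG2_rep :: "(ggen \<Rightarrow> complex mat) \<Rightarrow> bool" where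
  "STVG2_rep psi \<longleftrightarrow> (\<forall>x. psi x \<in> carrier_mat 3 3 \<and> invertible_mat (psi x)) \<and>
     (\<forall>(u,v) \<in> set STVG2_rels. ev psi u = ev psi v)"

definition homogeneous_local_rep :: "(bgen \<Rightarrow> complex mat) \<Rightarrow> bool" where
  "homogeneous_local_rep eta \<longleftrightarrow> STVB2_rep eta \<and>
     (\<exists>S R T G. GL2 S \<and> GL2 R \<and> GL2 G \<and> T \<in> carrier_mat 2 2 \<and>
        eta Sig = oplus1 S \<and> eta Rho = oplus1 R \<and> eta Tau = oplus1 T \<and>
        eta Gam1 = oplus1 G \<and> eta Gam2 = one_oplus G)"

definition loc_rep :: "complex mat \<Rightarrow> complex mat \<Rightarrow> complex mat \<Rightarrow> complex mat \<Rightarrow> bgen \<Rightarrow> complex mat" where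
  "loc_rep S R T G x = (case x of
      Sig \<Rightarrow> oplus1 S | SigInv \<Rightarrow> oplus1 (inv2 S) | Rho \<Rightarrow> oplus1 R | Tau \<Rightarrow> oplus1 T
    | Gam1 \<Rightarrow> oplus1 G | Gam2 \<Rightarrow> one_oplus G)"

definition equivalent_rep :: "(bgen \<Rightarrow> complex mat) \<Rightarrow> (bgen \<Rightarrow> complex mat) \<Rightarrow> bool" where
  "equivalent_rep eta eta' \<longleftrightarrow> (\<exists>P Q. P \<in> carrier_mat 3 3 \<and> Q \<in> carrier_mat 3 3 \<and>
      P * Q = 1\<^sub>m 3 \<and> Q * P = 1\<^sub>m 3 \<and> (\<forall>x. P * eta x * Q = eta' x))"

definition family :: "nat \<Rightarrow> complex mat \<Rightarrow> complex mat \<Rightarrow> complex mat \<Rightarrow> complex mat \<Rightarrow> bool" where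
  "family i S R T G \<longleftrightarrow>
   (if i = 1 then (\<exists>a b x f g. a^2*x^2 - b^2 \<noteq> 0 \<and> x \<noteq> 0 \<and>
        S = m2 a b (b/x^2) a \<and> R = m2 0 x (1/x) 0 \<and> T = m2 f g (g/x^2) f \<and> G = m2 (-1) 0 0 1)
    else if i = 2 then (\<exists>a b x z f g. a^2*x^2 + 2*a*b*x*z - b^2 + b^2*z^2 \<noteq> 0 \<and> x \<noteq> 0 \<and>
        S = m2 a b ((b - b*z^2)/x^2) ((a*x + 2*b*z)/x) \<and> R = m2 (-z) x ((1 - z^2)/x) z \<and>
        T = m2 f g ((g - g*z^2)/x^2) ((f*x + 2*g*z)/x) \<and> G = I2)
    else if i = 3 then (\<exists>a b c d f g. a*d - b*c \<noteq> 0 \<and> b \<noteq> 0 \<and>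
        S = m2 a b c d \<and> R = m2 (-1) 0 0 (-1) \<and> T = m2 f g (c*g/b) ((b*f - a*g + d*g)/b) \<and> G = I2)
    else if i = 4 then (\<exists>a b c d f g. a*d - b*c \<noteq> 0 \<and> b \<noteq> 0 \<and>
        S = m2 a b c d \<and> R = I2 \<and> T = m2 f g (c*g/b) ((b*f - a*g + d*g)/b) \<and> G = I2)
    else if i = 5 then (\<exists>a f g h k. a \<noteq> 0 \<and>
        S = m2 a 0 0 a \<and> R = m2 (-1) 0 0 (-1) \<and> T = m2 f g h k \<and> G = I2)
    else if i = 6 then (\<exists>a c d f h. a*d \<noteq> 0 \<and> c \<noteq> 0 \<and>
        S = m2 a 0 c d \<and> R = m2 (-1) 0 0 (-1) \<and> T = m2 f 0 h ((c*f - a*h + d*h)/c) \<and> G = I2)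
    else if i = 7 then (\<exists>a c y f h. a*(-2*c + a*y) \<noteq> 0 \<and> y \<noteq> 0 \<and>
        S = m2 a 0 c ((-2*c + a*y)/y) \<and> R = m2 1 0 y (-1) \<and> T = m2 f 0 h ((-2*h + f*y)/y) \<and> G = I2)
    else if i = 8 then (\<exists>a c y f h. a*(2*c + a*y) \<noteq> 0 \<and> y \<noteq> 0 \<and>
        S = m2 a 0 c ((2*c + a*y)/y) \<and> R = m2 (-1) 0 y 1 \<and> T = m2 f 0 h ((2*h + f*y)/y) \<and> G = I2)
    else if i = 9 then (\<exists>a f g h k. a \<noteq> 0 \<and>
        S = m2 a 0 0 a \<and> R = I2 \<and> T = m2 f g h k \<and> G = I2)
    else if i = 10 then (\<exists>a c d f h. a*d \<noteq> 0 \<and> c \<noteq> 0 \<and>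
        S = m2 a 0 c d \<and> R = I2 \<and> T = m2 f 0 h ((c*f - a*h + d*h)/c) \<and> G = I2)
    else if i = 11 then (\<exists>a d f k. a*d \<noteq> 0 \<and>
        S = m2 a 0 0 d \<and> R = m2 1 0 0 (-1) \<and> T = m2 f 0 0 k \<and> G = I2)
    else if i = 12 then (\<exists>a d f k. a*d \<noteq> 0 \<and>
        S = m2 a 0 0 d \<and> R = m2 (-1) 0 0 1 \<and> T = m2 f 0 0 k \<and> G = I2)
    else if i = 13 then (\<exists>a d f k. a*d \<noteq> 0 \<and>
        S = m2 a 0 0 d \<and> R = I2 \<and> T = m2 f 0 0 k \<and> G = I2)
    else False)"

definition ext_G :: "(bgen \<Rightarrow> complex mat) \<Rightarrow> complex mat \<Rightarrow> ggen \<Rightarrow> complex mat" where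
  "ext_G eta Tb x = (case x of GSig \<Rightarrow> eta Sig | GRho \<Rightarrow> eta Rho | GTau \<Rightarrow> eta Tau
     | GTauBar \<Rightarrow> Tb | GGam1 \<Rightarrow> eta Gam1 | GGam2 \<Rightarrow> eta Gam2)"

end

theory Submission imports Defs begin
definition mat3 :: "complex \<Rightarrow> complex \<Rightarrow> complex \<Rightarrow> complex \<Rightarrow> complex \<Rightarrow> complex \<Rightarrow> complex \<Rightarrow> complex \<Rightarrow> complex \<Rightarrow> complex mat" where
 "mat3 a b c d e f g h k = mat 3 3 (\<lambda>(i,j). if i = 0 then (if j = 0 then a else if j = 1 then b else c)
   else if i = 1 then (if j = 0 then d else if j = 1 then e else f) else (if j = 0 then g else if j = 1 then h else k))"

lemma sum3: "(\<Sum>i\<in>{0..<3::nat}. f i) = f 0 + f 1 + (f 2 :: complex)"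
  by (simp add: eval_nat_numeral atLeast0LessThan lessThan_Suc algebra_simps)
lemma sum2: "(\<Sum>i\<in>{0..<2::nat}. f i) = f 0 + (f 1 :: complex)"
  by (simp add: eval_nat_numeral atLeast0LessThan lessThan_Suc algebra_simps)
lemma less3: "(i::nat) < 3 \<longleftrightarrow> i = 0 \<or> i = 1 \<or> i = 2" by auto
lemma less2: "(i::nat) < 2 \<longleftrightarrow> i = 0 \<or> i = 1" by auto

lemma mat3_mult: "mat3 a b c d e f g h k * mat3 a' b' c' d' e' f' g' h' k' =
  mat3 (a*a'+b*d'+c*g') (a*b'+b*e'+c*h') (a*c'+b*f'+c*k')
       (d*a'+e*d'+f*g') (d*b'+e*e'+f*h') (d*c'+e*f'+f*k')
       (g*a'+h*d'+k*g') (g*b'+h*e'+k*h') (g*c'+h*f'+k*k')"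
  by (rule eq_matI) (auto simp: mat3_def scalar_prod_def sum3)

lemma mat3_eq: "mat3 a b c d e f g h k = mat3 a' b' c' d' e' f' g' h' k' \<longleftrightarrow>
  a = a' \<and> b = b' \<and> c = c' \<and> d = d' \<and> e = e' \<and> f = f' \<and> g = g' \<and> h = h' \<and> k = k'"
proof
  assume H: "mat3 a b c d e f g h k = mat3 a' b' c' d' e' f' g' h' k'"
  have "\<And>i j. i < 3 \<Longrightarrow> j < 3 \<Longrightarrow> mat3 a b c d e f g h k $$ (i,j) = mat3 a' b' c' d' e' f' g' h' k' $$ (i,j)"
    using H by simp
  from this[of 0 0] this[of 0 1] this[of 0 2] this[of 1 0] this[of 1 1] this[of 1 2]
       this[of 2 0] this[of 2 1] this[of 2 2]
  show "a = a' \<and> b = b' \<and> c = c' \<and> d = d' \<and> e = e' \<and> f = f' \<and> g = g' \<and> h = h' \<and> k = k'"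
    by (simp add: mat3_def)
qed simp

lemma mat3_carrier: "mat3 a b c d e f g h k \<in> carrier_mat 3 3" by (simp add: mat3_def)

lemma m2_carrier: "m2 a b c d \<in> carrier_mat 2 2" by (simp add: m2_def)

lemma m2_mult: "m2 a b c d * m2 a' b' c' d' = m2 (a*a'+b*c') (a*b'+b*d') (c*a'+d*c') (c*b'+d*d')"
  by (rule eq_matI) (auto simp: m2_def scalar_prod_def sum2)

lemma m2_eq: "m2 a b c d = m2 a' b' c' d' \<longleftrightarrow> a = a' \<and> b = b' \<and> c = c' \<and> d = d'"
proof
  assume H: "m2 a b c d = m2 a' b' c' d'"
  have "\<And>i j. i < 2 \<Longrightarrow> j < 2 \<Longrightarrow> m2 a b c d $$ (i,j) = m2 a' b' c' d' $$ (i,j)"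
    using H by simp
  from this[of 0 0] this[of 0 1] this[of 1 0] this[of 1 1]
  show "a = a' \<and> b = b' \<and> c = c' \<and> d = d'" by (simp add: m2_def)
qed simp

lemma one2: "1\<^sub>m 2 = m2 1 0 0 1"
  by (rule eq_matI) (auto simp: m2_def less2)
lemma one3: "1\<^sub>m 3 = mat3 1 0 0 0 1 0 0 0 1"
  by (rule eq_matI) (auto simp: mat3_def less3)

lemma oplus1_m2: "oplus1 (m2 a b c d) = mat3 a b 0 c d 0 0 0 1"
  by (rule eq_matI) (auto simp: mat3_def m2_def oplus1_def less3)
lemma one_oplus_m2: "one_oplus (m2 a b c d) = mat3 1 0 0 0 a b 0 c d"
  by (rule eq_matI) (auto simp: mat3_def m2_def one_oplus_def less3)

lemma m2_cases: "M \<in> carrier_mat 2 2 \<Longrightarrow> \<exists>a b c d. M = m2 a b c d"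
  apply (rule exI[of _ "M $$ (0,0)"], rule exI[of _ "M $$ (0,1)"], rule exI[of _ "M $$ (1,0)"], rule exI[of _ "M $$ (1,1)"])
  by (rule eq_matI) (auto simp: m2_def less2)
lemma mat3_cases: "M \<in> carrier_mat 3 3 \<Longrightarrow> \<exists>a b c d e f g h k. M = mat3 a b c d e f g h k"
  apply (rule exI[of _ "M $$ (0,0)"], rule exI[of _ "M $$ (0,1)"], rule exI[of _ "M $$ (0,2)"])
  apply (rule exI[of _ "M $$ (1,0)"], rule exI[of _ "M $$ (1,1)"], rule exI[of _ "M $$ (1,2)"])
  apply (rule exI[of _ "M $$ (2,0)"], rule exI[of _ "M $$ (2,1)"], rule exI[of _ "M $$ (2,2)"])
  by (rule eq_matI) (auto simp: mat3_def less3)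

lemma inv2_m2: "inv2 (m2 a b c d) = m2 (d/(a*d-b*c)) (-b/(a*d-b*c)) (-c/(a*d-b*c)) (a/(a*d-b*c))"
  by (simp add: inv2_def m2_def Let_def)

lemma fam1I: "a^2*x^2 - b^2 \<noteq> 0 \<Longrightarrow> x \<noteq> 0 \<Longrightarrow> S = m2 a b (b/x^2) a \<Longrightarrow> R = m2 0 x (1/x) 0 \<Longrightarrow> T = m2 f g (g/x^2) f \<Longrightarrow> G = m2 (-1) 0 0 1\<Longrightarrow> family 1 S R T G"
  unfolding family_def by simp blast

lemma fam2I: "a^2*x^2 + 2*a*b*x*z - b^2 + b^2*z^2 \<noteq> 0 \<Longrightarrow> x \<noteq> 0 \<Longrightarrow> S = m2 a b ((b - b*z^2)/x^2) ((a*x + 2*b*z)/x) \<Longrightarrow> R = m2 (-z) x ((1 - z^2)/x) z \<Longrightarrow> T = m2 f g ((g - g*z^2)/x^2) ((f*x + 2*g*z)/x) \<Longrightarrow> G = I2\<Longrightarrow> family 2 S R T G"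
  unfolding family_def by simp blast

lemma fam3I: "a*d - b*c \<noteq> 0 \<Longrightarrow> b \<noteq> 0 \<Longrightarrow> S = m2 a b c d \<Longrightarrow> R = m2 (-1) 0 0 (-1) \<Longrightarrow> T = m2 f g (c*g/b) ((b*f - a*g + d*g)/b) \<Longrightarrow> G = I2\<Longrightarrow> family 3 S R T G"
  unfolding family_def by simp blast

lemma fam4I: "a*d - b*c \<noteq> 0 \<Longrightarrow> b \<noteq> 0 \<Longrightarrow> S = m2 a b c d \<Longrightarrow> R = I2 \<Longrightarrow> T = m2 f g (c*g/b) ((b*f - a*g + d*g)/b) \<Longrightarrow> G = I2\<Longrightarrow> family 4 S R T G"
  unfolding family_def by simp blast

lemma fam5I: "a \<noteq> 0 \<Longrightarrow> S = m2 a 0 0 a \<Longrightarrow> R = m2 (-1) 0 0 (-1) \<Longrightarrow> T = m2 f g h k \<Longrightarrow> G = I2\<Longrightarrow> family 5 S R T G"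
  unfolding family_def by simp blast

lemma fam6I: "a*d \<noteq> 0 \<Longrightarrow> c \<noteq> 0 \<Longrightarrow> S = m2 a 0 c d \<Longrightarrow> R = m2 (-1) 0 0 (-1) \<Longrightarrow> T = m2 f 0 h ((c*f - a*h + d*h)/c) \<Longrightarrow> G = I2\<Longrightarrow> family 6 S R T G"
  unfolding family_def by simp blast

lemma fam7I: "a*(-2*c + a*y) \<noteq> 0 \<Longrightarrow> y \<noteq> 0 \<Longrightarrow> S = m2 a 0 c ((-2*c + a*y)/y) \<Longrightarrow> R = m2 1 0 y (-1) \<Longrightarrow> T = m2 f 0 h ((-2*h + f*y)/y) \<Longrightarrow> G = I2\<Longrightarrow> family 7 S R T G"
  unfolding family_def by simp blast

lemma fam8I: "a*(2*c + a*y) \<noteq> 0 \<Longrightarrow> y \<noteq> 0 \<Longrightarrow> S = m2 a 0 c ((2*c + a*y)/y) \<Longrightarrow> R = m2 (-1) 0 y 1 \<Longrightarrow> T = m2 f 0 h ((2*h + f*y)/y) \<Longrightarrow> G = I2\<Longrightarrow> family 8 S R T G"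
  unfolding family_def by simp blast

lemma fam9I: "a \<noteq> 0 \<Longrightarrow> S = m2 a 0 0 a \<Longrightarrow> R = I2 \<Longrightarrow> T = m2 f g h k \<Longrightarrow> G = I2\<Longrightarrow> family 9 S R T G"
  unfolding family_def by simp blast

lemma fam10I: "a*d \<noteq> 0 \<Longrightarrow> c \<noteq> 0 \<Longrightarrow> S = m2 a 0 c d \<Longrightarrow> R = I2 \<Longrightarrow> T = m2 f 0 h ((c*f - a*h + d*h)/c) \<Longrightarrow> G = I2\<Longrightarrow> family 10 S R T G"
  unfolding family_def by simp blast

lemma fam11I: "a*d \<noteq> 0 \<Longrightarrow> S = m2 a 0 0 d \<Longrightarrow> R = m2 1 0 0 (-1) \<Longrightarrow> T = m2 f 0 0 k \<Longrightarrow> G = I2\<Longrightarrow> family 11 S R T G"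
  unfolding family_def by simp blast

lemma fam12I: "a*d \<noteq> 0 \<Longrightarrow> S = m2 a 0 0 d \<Longrightarrow> R = m2 (-1) 0 0 1 \<Longrightarrow> T = m2 f 0 0 k \<Longrightarrow> G = I2\<Longrightarrow> family 12 S R T G"
  unfolding family_def by simp blast

lemma fam13I: "a*d \<noteq> 0 \<Longrightarrow> S = m2 a 0 0 d \<Longrightarrow> R = I2 \<Longrightarrow> T = m2 f 0 0 k \<Longrightarrow> G = I2\<Longrightarrow> family 13 S R T G"
  unfolding family_def by simp blast

lemma classify:
  fixes r1 r2 r3 r4 s1 s2 s3 s4 t1 t2 t3 t4 :: complex
  assumes RR: "r1*r1 + r2*r3 = 1" "r1*r2 + r2*r4 = 0" "r3*r1 + r4*r3 = 0" "r3*r2 + r4*r4 = 1"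
  and RS: "r1*s1 + r2*s3 = s1*r1 + s2*r3" "r1*s2+r2*s4 = s1*r2+s2*r4" "r3*s1+r4*s3 = s3*r1+s4*r3" "r3*s2+r4*s4 = s3*r2+s4*r4"
  and RT: "r1*t1 + r2*t3 = t1*r1 + t2*r3" "r1*t2+r2*t4 = t1*r2+t2*r4" "r3*t1+r4*t3 = t3*r1+t4*r3" "r3*t2+r4*t4 = t3*r2+t4*r4"
  and ST: "s1*t1+s2*t3 = t1*s1+t2*s3" "s1*t2+s2*t4 = t1*s2+t2*s4" "s3*t1+s4*t3 = t3*s1+t4*s3" "s3*t2+s4*t4 = t3*s2+t4*s4"
  and det: "s1*s4 - s2*s3 \<noteq> 0"
  shows "(\<exists>i\<in>{1..13}. family i (m2 s1 s2 s3 s4) (m2 r1 r2 r3 r4) (m2 t1 t2 t3 t4) I2)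
     \<or> (r1 = -1 \<and> r2 = 0 \<and> r3 = 0 \<and> r4 = -1 \<and> s2 = 0 \<and> s3 = 0 \<and> t2 = 0 \<and> t3 = 0 \<and> s1 \<noteq> s4)"
proof (cases "r2 = 0")
  case False
  have "r2*(r1+r4) = 0" using RR(2) by (simp add: algebra_simps)
  then have "r1 + r4 = 0" using False by simp
  then have r4: "r4 = - r1" by (simp add: eq_neg_iff_add_eq_0 add.commute)
  have "r3*r2 = 1 - r4^2" using RR(1) r4 by (simp add: algebra_simps power2_eq_square)
  then have r3: "r3 = (1 - r4^2)/r2" using False by (simp add: eq_divide_eq)
  have "s3 * r2 = s2 * r3" using RS(1) by (simp add: algebra_simps)
  then have "s3 * r2^2 = s2 - s2*r4^2" unfolding r3 using False by (simp add: field_simps power2_eq_square)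
  then have s3: "s3 = (s2 - s2*r4^2)/r2^2" using False by (simp add: eq_divide_eq)
  have "s4 * r2 = s1*r2 + 2*s2*r4" using RS(2) r4 by (simp add: algebra_simps)
  then have s4: "s4 = (s1*r2 + 2*s2*r4)/r2" using False by (simp add: eq_divide_eq)
  have "t3 * r2 = t2 * r3" using RT(1) by (simp add: algebra_simps)
  then have "t3 * r2^2 = t2 - t2*r4^2" unfolding r3 using False by (simp add: field_simps power2_eq_square)
  then have t3: "t3 = (t2 - t2*r4^2)/r2^2" using False by (simp add: eq_divide_eq)
  have "t4 * r2 = t1*r2 + 2*t2*r4" using RT(2) r4 by (simp add: algebra_simps)
  then have t4: "t4 = (t1*r2 + 2*t2*r4)/r2" using False by (simp add: eq_divide_eq)
  have r1: "r1 = - r4" using r4 by simp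
  have "(s1*s4 - s2*s3) * r2^2 = s1^2*r2^2 + 2*s1*s2*r2*r4 - s2^2 + s2^2*r4^2"
    unfolding s3 s4 using False by (simp add: field_simps power2_eq_square)
  then have d2: "s1^2*r2^2 + 2*s1*s2*r2*r4 - s2^2 + s2^2*r4^2 \<noteq> 0" using det False by auto
  have "family 2 (m2 s1 s2 s3 s4) (m2 r1 r2 r3 r4) (m2 t1 t2 t3 t4) I2"
    by (rule fam2I[where a=s1 and b=s2 and x=r2 and z=r4 and f=t1 and g=t2]) (use d2 False in \<open>simp_all add: m2_eq s3 s4 t3 t4 r1 r3\<close>)
  then show ?thesis by force
next
  case True
  have sq1: "x = 1 \<or> x = -1" if "x*x = (1::complex)" for x
  proof -
    have "(x - 1)*(x + 1) = 0" using that by (simp add: algebra_simps)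
    then show ?thesis by (auto simp: eq_neg_iff_add_eq_0 add.commute)
  qed
  have r1: "r1 = 1 \<or> r1 = -1" using RR(1) True sq1 by simp
  have r4: "r4 = 1 \<or> r4 = -1" using RR(4) True sq1 by simp
  have RS1: "s2*r3 = 0" "s2*(r1 - r4) = 0" "r3*(s1 - s4) = (r1 - r4)*s3"
    using RS True by (simp_all add: algebra_simps)
  have RT1: "t2*r3 = 0" "t2*(r1 - r4) = 0" "r3*(t1 - t4) = (r1 - r4)*t3"
    using RT True by (simp_all add: algebra_simps)
  have ST1: "s2*t3 = t2*s3" "s2*t4 = t1*s2+t2*s4 - s1*t2" "s3*t1+s4*t3 = t3*s1+t4*s3"
    using ST by (simp_all add: algebra_simps)
  show ?thesis
  proof (cases "r1 = r4")
    case True2: True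
    have "r3 * (2*r1) = 0" using RR(3) True2 by (simp add: algebra_simps)
    then have r3: "r3 = 0" using r1 by auto
    have R: "m2 r1 r2 r3 r4 = m2 (-1) 0 0 (-1) \<or> m2 r1 r2 r3 r4 = I2"
      using r1 True True2 r3 by (auto simp: I2_def)
    show ?thesis
    proof (cases "s2 = 0")
      case False
      have t3: "t3 = s3*t2/s2" using ST1(1) False by (simp add: eq_divide_eq mult.commute)
      have t4: "t4 = (s2*t1 - s1*t2 + s4*t2)/s2" using ST1(2) False by (simp add: eq_divide_eq algebra_simps)
      have "family 3 (m2 s1 s2 s3 s4) (m2 r1 r2 r3 r4) (m2 t1 t2 t3 t4) I2 \<or> family 4 (m2 s1 s2 s3 s4) (m2 r1 r2 r3 r4) (m2 t1 t2 t3 t4) I2"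
        using R
        apply (elim disjE)
         apply (rule disjI1, rule fam3I[where a=s1 and b=s2 and c=s3 and d=s4 and f=t1 and g=t2])
               apply (use det False in \<open>simp_all add: t3 t4\<close>)
        apply (rule disjI2, rule fam4I[where a=s1 and b=s2 and c=s3 and d=s4 and f=t1 and g=t2])
              apply (use det False in \<open>simp_all add: t3 t4\<close>)
        done
      then show ?thesis by force
    next
      case s2: True
      show ?thesis
      proof (cases "s3 = 0")
        case False
        have t2: "t2 = 0" using ST1(1) False s2 by simp
        have t4: "t4 = (s3*t1 - s1*t3 + s4*t3)/s3" using ST1(3) False by (simp add: eq_divide_eq algebra_simps)
        have "family 6 (m2 s1 s2 s3 s4) (m2 r1 r2 r3 r4) (m2 t1 t2 t3 t4) I2 \<or> family 10 (m2 s1 s2 s3 s4) (m2 r1 r2 r3 r4) (m2 t1 t2 t3 t4) I2"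
          using R
          apply (elim disjE)
           apply (rule disjI1, rule fam6I[where a=s1 and c=s3 and d=s4 and f=t1 and h=t3])
                apply (use det False s2 in \<open>simp_all add: t2 t4\<close>)
          apply (rule disjI2, rule fam10I[where a=s1 and c=s3 and d=s4 and f=t1 and h=t3])
               apply (use det False s2 in \<open>simp_all add: t2 t4\<close>)
          done
        then show ?thesis by force
      next
        case s3: True
        show ?thesis
        proof (cases "s1 = s4")
          case s14: True
          have "family 5 (m2 s1 s2 s3 s4) (m2 r1 r2 r3 r4) (m2 t1 t2 t3 t4) I2 \<or> family 9 (m2 s1 s2 s3 s4) (m2 r1 r2 r3 r4) (m2 t1 t2 t3 t4) I2"
            using R
            apply (elim disjE)
             apply (rule disjI1, rule fam5I[where a=s1 and f=t1 and g=t2 and h=t3 and k=t4])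
                 apply (use det s2 s3 s14 in \<open>simp_all\<close>)
            apply (rule disjI2, rule fam9I[where a=s1 and f=t1 and g=t2 and h=t3 and k=t4])
                apply (use det s2 s3 s14 in \<open>simp_all\<close>)
            done
          then show ?thesis by force
        next
          case s14: False
          have t2: "t2 = 0" using ST(2) s2 s14 by (simp add: algebra_simps)
          have t3: "t3 = 0" using ST(3) s3 s14 by (simp add: algebra_simps)
          show ?thesis
          proof (cases "r1 = 1")
            case True
            have "family 13 (m2 s1 s2 s3 s4) (m2 r1 r2 r3 r4) (m2 t1 t2 t3 t4) I2"
              by (rule fam13I[where a=s1 and d=s4 and f=t1 and k=t4])
                 (use det s2 s3 t2 t3 True True2 \<open>r2 = 0\<close> r3 in \<open>simp_all add: I2_def\<close>)
            then show ?thesis by force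
          next
            case False
            then have "r1 = -1" using r1 by simp
            then show ?thesis using True2 \<open>r2 = 0\<close> r3 s2 s3 t2 t3 s14 by simp
          qed
        qed
      qed
    qed
  next
    case False2: False
    have s2: "s2 = 0" using RS1(2) False2 by simp
    have t2: "t2 = 0" using RT1(2) False2 by simp
    have d: "s1*s4 \<noteq> 0" using det s2 by simp
    show ?thesis
    proof (cases "r1 = 1")
      case r11: True
      then have r41: "r4 = -1" using r4 False2 by auto
      show ?thesis
      proof (cases "r3 = 0")
        case r3: True
        have s3: "s3 = 0" using RS1(3) r3 r11 r41 by simp
        have t3: "t3 = 0" using RT1(3) r3 r11 r41 by simp
        have "family 11 (m2 s1 s2 s3 s4) (m2 r1 r2 r3 r4) (m2 t1 t2 t3 t4) I2"
          by (rule fam11I[where a=s1 and d=s4 and f=t1 and k=t4])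
             (use d s2 s3 t2 t3 r11 r41 True r3 in \<open>simp_all\<close>)
        then show ?thesis by force
      next
        case r3: False
        have s4: "s4 = (-2*s3 + s1*r3)/r3" using RS1(3) r3 r11 r41 by (simp add: eq_divide_eq algebra_simps)
        have t4: "t4 = (-2*t3 + t1*r3)/r3" using RT1(3) r3 r11 r41 by (simp add: eq_divide_eq algebra_simps)
        have "family 7 (m2 s1 s2 s3 s4) (m2 r1 r2 r3 r4) (m2 t1 t2 t3 t4) I2"
          by (rule fam7I[where a=s1 and c=s3 and y=r3 and f=t1 and h=t3])
             (use d s2 t2 r11 r41 True r3 in \<open>simp_all add: s4 t4\<close>)
        then show ?thesis by force
      qed
    next
      case False
      then have r11: "r1 = -1" using r1 by auto
      then have r41: "r4 = 1" using r4 False2 by auto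
      show ?thesis
      proof (cases "r3 = 0")
        case r3: True
        have s3: "s3 = 0" using RS1(3) r3 r11 r41 by simp
        have t3: "t3 = 0" using RT1(3) r3 r11 r41 by simp
        have "family 12 (m2 s1 s2 s3 s4) (m2 r1 r2 r3 r4) (m2 t1 t2 t3 t4) I2"
          by (rule fam12I[where a=s1 and d=s4 and f=t1 and k=t4])
             (use d s2 s3 t2 t3 r11 r41 True r3 in \<open>simp_all\<close>)
        then show ?thesis by force
      next
        case r3: False
        have s4: "s4 = (2*s3 + s1*r3)/r3" using RS1(3) r3 r11 r41 by (simp add: eq_divide_eq algebra_simps)
        have t4: "t4 = (2*t3 + t1*r3)/r3" using RT1(3) r3 r11 r41 by (simp add: eq_divide_eq algebra_simps)
        have "family 8 (m2 s1 s2 s3 s4) (m2 r1 r2 r3 r4) (m2 t1 t2 t3 t4) I2"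
          by (rule fam8I[where a=s1 and c=s3 and y=r3 and f=t1 and h=t3])
             (use d s2 t2 r11 r41 True r3 in \<open>simp_all add: s4 t4\<close>)
        then show ?thesis by force
      qed
    qed
  qed
qed

lemma assoc3: "A \<in> carrier_mat 3 3 \<Longrightarrow> B \<in> carrier_mat 3 3 \<Longrightarrow> C \<in> carrier_mat 3 3 \<Longrightarrow> A * B * C = A * (B * (C :: complex mat))"
  by (rule assoc_mult_mat)
lemma mult3: "A \<in> carrier_mat 3 3 \<Longrightarrow> B \<in> carrier_mat 3 3 \<Longrightarrow> A * B \<in> carrier_mat 3 3"
  by (rule mult_carrier_mat)

lemma cancel1: "A * B = 1\<^sub>m 3 \<Longrightarrow> A \<in> carrier_mat 3 3 \<Longrightarrow> B \<in> carrier_mat 3 3 \<Longrightarrow> Z \<in> carrier_mat 3 3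
  \<Longrightarrow> A * (B * Z) = (Z :: complex mat)"
  by (metis assoc_mult_mat left_mult_one_mat)

lemma inv_unique:
  fixes A M N :: "complex mat"
  assumes c: "A \<in> carrier_mat 3 3" "M \<in> carrier_mat 3 3" "N \<in> carrier_mat 3 3"
    and "A * M = 1\<^sub>m 3" "N * A = 1\<^sub>m 3"
  shows "M = N"
proof -
  have "M = (N * A) * M" using assms by simp
  also have "\<dots> = N * (A * M)" using c by (simp add: assoc3 mult3)
  also have "\<dots> = N" using assms by simp
  finally show ?thesis .
qed

lemma comm_lemma:
  fixes A B :: "complex mat"
  assumes c: "A \<in> carrier_mat 3 3" "B \<in> carrier_mat 3 3"
    and AA: "A * A = 1\<^sub>m 3" and ABA: "A * (B * A) = B"
  shows "A * B = B * A"
proof -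
  have "B * A = (A * (B * A)) * A" using ABA by simp
  also have "\<dots> = A * (B * (A * A))" using c by (simp add: assoc3 mult3)
  also have "\<dots> = A * B" using c AA by simp
  finally show ?thesis by simp
qed

lemma tb_rel1:
  fixes S Ta Tb :: "complex mat"
  assumes c: "S \<in> carrier_mat 3 3" "Ta \<in> carrier_mat 3 3" "Tb \<in> carrier_mat 3 3"
    and h: "S * Ta = Ta * S" "Ta * Tb = 1\<^sub>m 3" "Tb * Ta = 1\<^sub>m 3"
  shows "S * Tb = Tb * S"
proof -
  have "Tb * S = Tb * (S * (Ta * Tb))" using c h by simp
  also have "\<dots> = Tb * (S * Ta) * Tb" using c by (simp add: assoc3 mult3)
  also have "\<dots> = Tb * (Ta * S) * Tb" using h by simp
  also have "\<dots> = (Tb * Ta) * (S * Tb)" using c by (simp add: assoc3 mult3)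
  also have "\<dots> = S * Tb" using c h by simp
  finally show ?thesis by simp
qed

lemma tb_rel2:
  fixes R Ta Tb G1 G2 :: "complex mat"
  assumes c: "R \<in> carrier_mat 3 3" "Ta \<in> carrier_mat 3 3" "Tb \<in> carrier_mat 3 3" "G1 \<in> carrier_mat 3 3" "G2 \<in> carrier_mat 3 3"
    and h: "R * R = 1\<^sub>m 3" "G1 * G1 = 1\<^sub>m 3" "G2 * G2 = 1\<^sub>m 3" "G1 * G2 = G2 * G1"
       "R * (Ta * R) = G2 * (G1 * (Ta * (G1 * G2)))" "Ta * Tb = 1\<^sub>m 3" "Tb * Ta = 1\<^sub>m 3"
  shows "R * (Tb * R) = G2 * (G1 * (Tb * (G1 * G2)))"
proof -
  let ?L = "R * (Tb * R)" and ?M = "G2 * (G1 * (Tb * (G1 * G2)))"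
  have cL: "?L \<in> carrier_mat 3 3" and cM: "?M \<in> carrier_mat 3 3" using c by auto
  note cc = cancel1[OF h(1) c(1) c(1)] cancel1[OF h(2) c(4) c(4)] cancel1[OF h(3) c(5) c(5)]
     cancel1[OF h(6) c(2) c(3)] cancel1[OF h(7) c(3) c(2)]
  have 1: "?L * (R * (Ta * R)) = 1\<^sub>m 3" using c h(1) by (simp add: assoc3 mult3 cc)
  have 2: "(G2 * (G1 * (Ta * (G1 * G2)))) * ?M = 1\<^sub>m 3" using c h(2,3) by (simp add: assoc3 mult3 cc)
  have "?L = ?L * ((R * (Ta * R)) * ?M)" using 2 h(5) cL by (simp add: right_mult_one_mat)
  also have "\<dots> = (?L * (R * (Ta * R))) * ?M" using c by (simp add: assoc3 mult3)
  also have "\<dots> = ?M" using 1 cM by (simp add: left_mult_one_mat)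
  finally show ?thesis .
qed

lemma invI: "A \<in> carrier_mat 3 3 \<Longrightarrow> B \<in> carrier_mat 3 3 \<Longrightarrow> A * B = 1\<^sub>m 3 \<Longrightarrow> B * A = 1\<^sub>m 3 \<Longrightarrow> invertible_mat (A :: complex mat)"
  unfolding invertible_mat_def inverts_mat_def by auto

lemma GL2_det: "GL2 (m2 a b c d) \<Longrightarrow> a*d - b*c \<noteq> 0"
proof -
  assume "GL2 (m2 a b c d)"
  then obtain N where N: "N \<in> carrier_mat 2 2" "m2 a b c d * N = 1\<^sub>m 2" unfolding GL2_def by blast
  obtain n1 n2 n3 n4 where "N = m2 n1 n2 n3 n4" using m2_cases N(1) by blast
  with N(2) have e: "a*n1+b*n3 = 1" "a*n2+b*n4 = 0" "c*n1+d*n3 = 0" "c*n2+d*n4 = 1" by (simp_all add: m2_mult one2 m2_eq)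
  have "(a*d - b*c)*(n1*n4 - n2*n3) = (a*n1+b*n3)*(c*n2+d*n4) - (a*n2+b*n4)*(c*n1+d*n3)" by (simp add: algebra_simps)
  also have "\<dots> = 1" using e by simp
  finally show ?thesis by auto
qed

lemma part2:
  assumes car: "\<And>x. eta x \<in> carrier_mat 3 3"
    and rels: "\<forall>(u,v) \<in> set STVB2_rels. ev eta u = ev eta v"
    and Tb: "Tb \<in> carrier_mat 3 3" "eta Tau * Tb = 1\<^sub>m 3" "Tb * eta Tau = 1\<^sub>m 3"
  shows "STVG2_rep (ext_G eta Tb)"
proof -
  have X: "ev eta [Sig, SigInv] = ev eta [] \<and> ev eta [SigInv, Sig] = ev eta [] \<and>
    ev eta [Rho, Rho] = ev eta [] \<and> ev eta [Gam1, Gam1] = ev eta [] \<and> ev eta [Gam2, Gam2] = ev eta [] \<and>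
    ev eta [Gam1, Gam2] = ev eta [Gam2, Gam1]
    \<and> ev eta [Rho, Gam1] = ev eta [Gam2, Rho] \<and> ev eta [Rho, Sig, Rho] = ev eta [Gam2, Gam1, Sig, Gam1, Gam2]
    \<and> ev eta [Sig, Tau] = ev eta [Tau, Sig] \<and> ev eta [Rho, Tau, Rho] = ev eta [Gam2, Gam1, Tau, Gam1, Gam2]"
    using rels by (simp add: STVB2_rels_def)
  note X = X[unfolded ev_def, simplified, simplified right_mult_one_mat[OF car]]
  have inv: "invertible_mat (ext_G eta Tb x)" for x
  proof (cases x)
    case GSig then show ?thesis using X car by (auto simp: ext_G_def intro: invI)
  next
    case GRho then show ?thesis using X car by (auto simp: ext_G_def intro: invI)
  next
    case GTau then show ?thesis using Tb car by (auto simp: ext_G_def intro: invI)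
  next
    case GTauBar then show ?thesis using Tb car by (auto simp: ext_G_def intro: invI)
  next
    case GGam1 then show ?thesis using X car by (auto simp: ext_G_def intro: invI)
  next
    case GGam2 then show ?thesis using X car by (auto simp: ext_G_def intro: invI)
  qed
  have r1: "eta Sig * Tb = Tb * eta Sig"
    by (rule tb_rel1[OF car car Tb(1)]) (use X Tb in auto)
  have r2: "eta Rho * (Tb * eta Rho) = eta Gam2 * (eta Gam1 * (Tb * (eta Gam1 * eta Gam2)))"
    by (rule tb_rel2[OF car car Tb(1) car car]) (use X Tb in auto)
  show ?thesis
    unfolding STVG2_rep_def
    using inv car Tb X r1 r2 by (auto simp: STVG2_rels_def ev_def ext_G_def right_mult_one_mat[OF car] right_mult_one_mat[OF Tb(1)] split: ggen.split)
qed

lemma equiv_id: "(\<And>x. eta x \<in> carrier_mat 3 3) \<Longrightarrow> (\<And>x. eta x = eta' x) \<Longrightarrow> equivalent_rep eta eta'"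
  unfolding equivalent_rep_def
proof (rule exI[of _ "1\<^sub>m 3"], rule exI[of _ "1\<^sub>m 3"], intro conjI allI)
  fix x assume c: "\<And>x. eta x \<in> carrier_mat 3 3" and e: "\<And>x. eta x = eta' x"
  show "1\<^sub>m 3 * eta x * 1\<^sub>m 3 = eta' x" using c[of x] e[of x] by (simp add: left_mult_one_mat right_mult_one_mat)
qed auto

lemma part1:
  assumes "homogeneous_local_rep eta"
  shows "\<exists>i \<in> {1..13}. \<exists>S R T G. family i S R T G \<and> equivalent_rep eta (loc_rep S R T G)"
proof -
  from assms obtain S R T G where rep: "STVB2_rep eta" and gS: "GL2 S" and gR: "GL2 R" and gG: "GL2 G"
    and Tc: "T \<in> carrier_mat 2 2"
    and eS: "eta Sig = oplus1 S" and eR: "eta Rho = oplus1 R" and eT: "eta Tau = oplus1 T"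
    and eG1: "eta Gam1 = oplus1 G" and eG2: "eta Gam2 = one_oplus G"
    unfolding homogeneous_local_rep_def by blast
  obtain s1 s2 s3 s4 where S: "S = m2 s1 s2 s3 s4" using gS m2_cases GL2_def by blast
  obtain r1 r2 r3 r4 where R: "R = m2 r1 r2 r3 r4" using gR m2_cases GL2_def by blast
  obtain t1 t2 t3 t4 where T: "T = m2 t1 t2 t3 t4" using Tc m2_cases by blast
  obtain g1 g2 g3 g4 where G: "G = m2 g1 g2 g3 g4" using gG m2_cases GL2_def by blast
  have det: "s1*s4 - s2*s3 \<noteq> 0" using gS S GL2_det by simp
  have car: "\<And>x. eta x \<in> carrier_mat 3 3" using rep STVB2_rep_def by blast
  have rels: "\<forall>(u,v) \<in> set STVB2_rels. ev eta u = ev eta v" using rep STVB2_rep_def by blast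
  have X: "ev eta [Sig, SigInv] = ev eta [] \<and> ev eta [SigInv, Sig] = ev eta [] \<and>
    ev eta [Rho, Rho] = ev eta [] \<and> ev eta [Gam1, Gam1] = ev eta [] \<and> ev eta [Gam2, Gam2] = ev eta [] \<and>
    ev eta [Gam1, Gam2] = ev eta [Gam2, Gam1]
    \<and> ev eta [Rho, Gam1] = ev eta [Gam2, Rho] \<and> ev eta [Rho, Sig, Rho] = ev eta [Gam2, Gam1, Sig, Gam1, Gam2]
    \<and> ev eta [Sig, Tau] = ev eta [Tau, Sig] \<and> ev eta [Rho, Tau, Rho] = ev eta [Gam2, Gam1, Tau, Gam1, Gam2]"
    using rels by (simp add: STVB2_rels_def)
  note X = X[unfolded ev_def, simplified, simplified right_mult_one_mat[OF car]]
  have SigInv: "eta SigInv = oplus1 (inv2 S)"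
  proof (rule inv_unique[OF car car])
    show "oplus1 (inv2 S) \<in> carrier_mat 3 3" by (simp add: S inv2_m2 oplus1_m2 mat3_carrier)
    show "eta Sig * eta SigInv = 1\<^sub>m 3" using X by simp
    define D where "D = s1*s4 - s2*s3"
    have D0: "D \<noteq> 0" using det D_def by simp
    show "oplus1 (inv2 S) * eta Sig = 1\<^sub>m 3"
      unfolding eS S inv2_m2 D_def[symmetric] oplus1_m2 mat3_mult one3 mat3_eq
      using D0 by (simp add: field_simps) (simp add: D_def algebra_simps)
  qed
  have Gc: "g2 = 0 \<and> g3 = 0" using X by (simp add: eG1 eG2 G oplus1_m2 one_oplus_m2 mat3_mult mat3_eq)
  have Gd: "g4 = 1 \<and> g1 * g1 = 1 \<and> r1 * g1 = r1 \<and> g1 * r4 = r4" using X Gc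
    by (auto simp: eG1 eG2 eR G R oplus1_m2 one_oplus_m2 mat3_mult mat3_eq one3)
  have "g1 = 1 \<or> g1 = -1"
  proof -
    have "(g1 - 1)*(g1 + 1) = 0" using Gd by (simp add: algebra_simps)
    then show ?thesis by (auto simp: eq_neg_iff_add_eq_0 add.commute)
  qed
  then show ?thesis
  proof
    assume g1: "g1 = -1"
    have r14: "r1 = 0" "r4 = 0" using Gd g1 by auto
    have Y: "r2 * r3 = 1 \<and> r2 * (s4 * r3) = s1 \<and> r3 * (s2 * r3) = s3 \<and> r2 * (t4 * r3) = t1 \<and> r3 * (t2 * r3) = t3"
      using X Gc Gd g1 r14
      by (simp add: eS eT eR eG1 eG2 S R T G oplus1_m2 one_oplus_m2 mat3_mult mat3_eq one3)
    have r2: "r2 \<noteq> 0" using Y by auto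
    have r3: "r3 = 1/r2" using Y r2 by (simp add: eq_divide_eq mult.commute)
    have Y1: "r2 * r3 = 1" and Y2: "r2 * (s4 * r3) = s1" and Y3: "r2 * (t4 * r3) = t1" using Y by auto
    have "s1 = s4 * (r2 * r3)" using Y2 by (simp add: ac_simps)
    then have s4: "s4 = s1" using Y1 by simp
    have "t1 = t4 * (r2 * r3)" using Y3 by (simp add: ac_simps)
    then have t4: "t4 = t1" using Y1 by simp
    have s3: "s3 = s2/r2^2" using Y r3 r2 by (simp add: field_simps power2_eq_square)
    have t3: "t3 = t2/r2^2" using Y r3 r2 by (simp add: field_simps power2_eq_square)
    have "(s1*s4 - s2*s3)*r2^2 = s1^2*r2^2 - s2^2" using r2 unfolding s4 s3 by (simp add: field_simps power2_eq_square)
    then have dd: "s1^2*r2^2 - s2^2 \<noteq> 0" using det r2 by auto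
    have fam: "family 1 S R T G"
      by (rule fam1I[where a=s1 and b=s2 and x=r2 and f=t1 and g=t2])
         (use dd r2 in \<open>simp_all add: S R T G s3 s4 t3 t4 r14 r3 Gc Gd g1\<close>)
    have "equivalent_rep eta (loc_rep S R T G)"
    proof (rule equiv_id[OF car])
      fix x show "eta x = loc_rep S R T G x"
        by (cases x) (simp_all add: loc_rep_def eS eR eT eG1 eG2 SigInv)
    qed
    with fam show ?thesis by force
  next
    assume g1: "g1 = 1"
    have GI: "G = I2" using G Gc Gd g1 by (simp add: I2_def)
    have G13: "eta Gam1 = 1\<^sub>m 3" "eta Gam2 = 1\<^sub>m 3"
      using Gc Gd g1 by (simp_all add: eG1 eG2 G oplus1_m2 one_oplus_m2 one3)
    have RR3: "eta Rho * eta Rho = 1\<^sub>m 3" using X by simp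
    have RSR3: "eta Rho * (eta Sig * eta Rho) = eta Sig"
      using X G13 car[of Sig] by (simp add: left_mult_one_mat right_mult_one_mat)
    have RTR3: "eta Rho * (eta Tau * eta Rho) = eta Tau"
      using X G13 car[of Tau] by (simp add: left_mult_one_mat right_mult_one_mat)
    have RS3: "eta Rho * eta Sig = eta Sig * eta Rho" by (rule comm_lemma[OF car car RR3 RSR3])
    have RT3: "eta Rho * eta Tau = eta Tau * eta Rho" by (rule comm_lemma[OF car car RR3 RTR3])
    have ST3: "eta Sig * eta Tau = eta Tau * eta Sig" using X by simp
    have C: "(\<exists>i\<in>{1..13}. family i (m2 s1 s2 s3 s4) (m2 r1 r2 r3 r4) (m2 t1 t2 t3 t4) I2)
     \<or> (r1 = -1 \<and> r2 = 0 \<and> r3 = 0 \<and> r4 = -1 \<and> s2 = 0 \<and> s3 = 0 \<and> t2 = 0 \<and> t3 = 0 \<and> s1 \<noteq> s4)"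
      apply (rule classify)
      using RR3 RS3 RT3 ST3 det by (simp_all add: eS eR eT S R T oplus1_m2 mat3_mult mat3_eq one3)
    then show ?thesis
    proof
      assume "\<exists>i\<in>{1..13}. family i (m2 s1 s2 s3 s4) (m2 r1 r2 r3 r4) (m2 t1 t2 t3 t4) I2"
      then obtain i where i: "i \<in> {1..13}" "family i S R T G" using S R T GI by blast
      have "equivalent_rep eta (loc_rep S R T G)"
      proof (rule equiv_id[OF car])
        fix x show "eta x = loc_rep S R T G x"
          by (cases x) (simp_all add: loc_rep_def eS eR eT eG1 eG2 SigInv)
      qed
      with i show ?thesis by blast
    next
      assume E: "r1 = -1 \<and> r2 = 0 \<and> r3 = 0 \<and> r4 = -1 \<and> s2 = 0 \<and> s3 = 0 \<and> t2 = 0 \<and> t3 = 0 \<and> s1 \<noteq> s4"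
      have d: "s1 \<noteq> 0" "s4 \<noteq> 0" using det E by auto
      have d2: "s4 - s1 \<noteq> 0" using E by auto
      let ?S = "m2 s1 (s4 - s1) 0 s4" and ?R = "m2 (-1) 0 0 (-1)" and ?T = "m2 t1 (t4 - t1) 0 t4"
      have fam: "family 3 ?S ?R ?T I2"
        by (rule fam3I[where a=s1 and b="s4-s1" and c=0 and d=s4 and f=t1 and g="t4-t1"])
           (use d d2 in \<open>simp_all add: m2_eq field_simps\<close>)
      have "equivalent_rep eta (loc_rep ?S ?R ?T I2)"
        unfolding equivalent_rep_def
      proof (rule exI[of _ "mat3 1 1 0 0 1 0 0 0 1"], rule exI[of _ "mat3 1 (-1) 0 0 1 0 0 0 1"], intro conjI allI)
        fix x
        show "mat3 1 1 0 0 1 0 0 0 1 * eta x * mat3 1 (-1) 0 0 1 0 0 0 1 = loc_rep ?S ?R ?T I2 x"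
          using E d
          by (cases x) (simp_all add: loc_rep_def eS eR eT G13 SigInv S R T inv2_m2 oplus1_m2 one_oplus_m2 I2_def
               mat3_mult mat3_eq one3 field_simps)
      qed (simp_all add: mat3_carrier mat3_mult one3)
      with fam show ?thesis by force
    qed
  qed
qed

theorem theorem4p1:
  fixes eta :: "bgen \<Rightarrow> complex mat"
  assumes "homogeneous_local_rep eta"
  shows "(\<exists>i \<in> {1..13}. \<exists>S R T G. family i S R T G \<and> equivalent_rep eta (loc_rep S R T G))
       \<and> (invertible_mat (eta Tau) \<longrightarrow>
            (\<forall>Tb. Tb \<in> carrier_mat 3 3 \<and> eta Tau * Tb = 1\<^sub>m 3 \<and> Tb * eta Tau = 1\<^sub>m 3
                  \<longrightarrow> STVG2_rep (ext_G eta Tb)))"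
proof
  show "\<exists>i \<in> {1..13}. \<exists>S R T G. family i S R T G \<and> equivalent_rep eta (loc_rep S R T G)"
    using part1[OF assms] .
  have rep: "STVB2_rep eta" using assms homogeneous_local_rep_def by blast
  have car: "\<And>x. eta x \<in> carrier_mat 3 3" using rep STVB2_rep_def by blast
  have rels: "\<forall>(u,v) \<in> set STVB2_rels. ev eta u = ev eta v" using rep STVB2_rep_def by blast
  show "invertible_mat (eta Tau) \<longrightarrow>
            (\<forall>Tb. Tb \<in> carrier_mat 3 3 \<and> eta Tau * Tb = 1\<^sub>m 3 \<and> Tb * eta Tau = 1\<^sub>m 3
                  \<longrightarrow> STVG2_rep (ext_G eta Tb))"
    using part2[OF car rels] by blast
qed

end
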